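(* For every integer $k\ge 8$, the Hasse diagram (directed graph of the cover relation) of $TW_k$ has clique-width at least $\lceil k/13\rceil$.
   Context: For an integer $k\ge3$, $TW_k$ ("trunk with woodpeckers") is the order on the elements $t_0,\dots,t_{k-1}$ together with one element $w_{a,b}$ for each pair of integers $0\le a$, $b\le k-1$ with $b\ge a+2$, whose order relation is: $t_j<t_l$ iff $j<l$; $t_j<w_{a,b}$ iff $j\le a$; $w_{a,b}<t_j$ iff $j\ge b$; $w_{a,b}<w_{c,d}$ iff $b\le c$; all other pairs are incomparable. It has $\frac{k^2-k}{2}+1$ elements; its covering pairs are $t_j\lessdot t_{j+1}$, $t_a\lessdot w_{a,b}$ and $w_{a,b}\lessdot t_b$. ($x$ is covered by $y$ if $x<y$ and no $z$ satisfies $x<z<y$.) Clique-width is the standard notion (minimum number of labels in a clique-width expression). *)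

theory Defs
  imports Complex_Main
begin

text \<open>Only the values of lab on V matter.
  Vertices of the expression are named by the vertices of the graph itself, so no
  isomorphism is needed.\<close>

inductive cw_gen :: "nat \<Rightarrow> 'v set \<Rightarrow> ('v \<times> 'v) set \<Rightarrow> ('v \<Rightarrow> nat) \<Rightarrow> bool" for k :: nat where
  cw_vertex: "i < k \<Longrightarrow> cw_gen k {v} {} (\<lambda>_. i)"
| cw_union: "cw_gen k V1 E1 l1 \<Longrightarrow> cw_gen k V2 E2 l2 \<Longrightarrow> V1 \<inter> V2 = {} \<Longrightarrow>
     cw_gen k (V1 \<union> V2) (E1 \<union> E2) (\<lambda>x. if x \<in> V1 then l1 x else l2 x)"
| cw_arcs: "cw_gen k V E l \<Longrightarrow> i < k \<Longrightarrow> j < k \<Longrightarrow> i \<noteq> j \<Longrightarrow>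
     cw_gen k V (E \<union> {(x, y). x \<in> V \<and> y \<in> V \<and> l x = i \<and> l y = j}) l"
| cw_relabel: "cw_gen k V E l \<Longrightarrow> i < k \<Longrightarrow> j < k \<Longrightarrow>
     cw_gen k V E (\<lambda>x. if l x = i then j else l x)"

definition clique_width :: "'v set \<Rightarrow> ('v \<times> 'v) set \<Rightarrow> nat" where
  "clique_width V E = (LEAST k. \<exists>l. cw_gen k V E l)"

section \<open>The order TW_k (trunk with woodpeckers)\<close>

datatype tw_elem = T nat | W nat nat

definition tw_elems :: "nat \<Rightarrow> tw_elem set" where
  "tw_elems k = {T j | j. j < k} \<union> {W a b | a b. b < k \<and> a + 2 \<le> b}"

fun tw_less :: "tw_elem \<Rightarrow> tw_elem \<Rightarrow> bool" where
  "tw_less (T j) (T l) = (j < l)"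
| "tw_less (T j) (W a b) = (j \<le> a)"
| "tw_less (W a b) (T j) = (b \<le> j)"
| "tw_less (W a b) (W c d) = (b \<le> c)"

definition tw_hasse :: "nat \<Rightarrow> (tw_elem \<times> tw_elem) set" where
  "tw_hasse k = {(x, y). x \<in> tw_elems k \<and> y \<in> tw_elems k \<and> tw_less x y \<and>
      \<not> (\<exists>z \<in> tw_elems k. tw_less x z \<and> tw_less z y)}"

end

theory Submission
  imports Defs
begin


lemma mem_T[simp]: "T j \<in> tw_elems k \<longleftrightarrow> j < k" by (auto simp: tw_elems_def)
lemma mem_W[simp]: "W a b \<in> tw_elems k \<longleftrightarrow> b < k \<and> a+2 \<le> b" by (auto simp: tw_elems_def)

lemma hTT: "(T j, T l) \<in> tw_hasse k \<longleftrightarrow> l = Suc j \<and> l < k"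
proof
  assume h: "(T j, T l) \<in> tw_hasse k"
  then have "j < l" "l < k" by (auto simp: tw_hasse_def)
  moreover have "\<not> Suc j < l"
  proof
    assume "Suc j < l"
    then have "T (Suc j) \<in> tw_elems k \<and> tw_less (T j) (T (Suc j)) \<and> tw_less (T (Suc j)) (T l)"
      using \<open>l < k\<close> by auto
    then show False using h unfolding tw_hasse_def by blast
  qed
  ultimately show "l = Suc j \<and> l < k" by auto
next
  assume "l = Suc j \<and> l < k"
  then show "(T j, T l) \<in> tw_hasse k" by (auto simp: tw_hasse_def tw_elems_def)
qed

lemma hTW: "(T j, W a b) \<in> tw_hasse k \<longleftrightarrow> j = a \<and> b < k \<and> a+2 \<le> b"
proof
  assume h: "(T j, W a b) \<in> tw_hasse k"
  then have "j \<le> a" "b < k" "a+2 \<le> b" by (auto simp: tw_hasse_def)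
  moreover have "\<not> j < a"
  proof
    assume "j < a"
    then have "T a \<in> tw_elems k \<and> tw_less (T j) (T a) \<and> tw_less (T a) (W a b)"
      using \<open>b < k\<close> \<open>a+2 \<le> b\<close> by auto
    then show False using h unfolding tw_hasse_def by blast
  qed
  ultimately show "j = a \<and> b < k \<and> a+2 \<le> b" by auto
next
  assume "j = a \<and> b < k \<and> a+2 \<le> b"
  then show "(T j, W a b) \<in> tw_hasse k" by (auto simp: tw_hasse_def tw_elems_def)
qed

lemma hWT: "(W a b, T j) \<in> tw_hasse k \<longleftrightarrow> j = b \<and> b < k \<and> a+2 \<le> b"
proof
  assume h: "(W a b, T j) \<in> tw_hasse k"
  then have "b \<le> j" "j < k" "a+2 \<le> b" by (auto simp: tw_hasse_def)
  moreover have "\<not> b < j"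
  proof
    assume "b < j"
    then have "T b \<in> tw_elems k \<and> tw_less (W a b) (T b) \<and> tw_less (T b) (T j)"
      using \<open>j < k\<close> by auto
    then show False using h unfolding tw_hasse_def by blast
  qed
  ultimately show "j = b \<and> b < k \<and> a+2 \<le> b" by auto
next
  assume "j = b \<and> b < k \<and> a+2 \<le> b"
  then show "(W a b, T j) \<in> tw_hasse k" by (auto simp: tw_hasse_def tw_elems_def)
qed

lemma hWW: "(W a b, W c d) \<notin> tw_hasse k"
proof
  assume h: "(W a b, W c d) \<in> tw_hasse k"
  then have "b \<le> c" "b < k" by (auto simp: tw_hasse_def)
  then have "T b \<in> tw_elems k \<and> tw_less (W a b) (T b) \<and> tw_less (T b) (W c d)" by auto
  then show False using h unfolding tw_hasse_def by blast
qed

lemma hasse_sub: "(x,y) \<in> tw_hasse k \<Longrightarrow> x \<in> tw_elems k \<and> y \<in> tw_elems k"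
  by (auto simp: tw_hasse_def)

lemma cw_basic: "cw_gen n V E l \<Longrightarrow> finite V \<and> V \<noteq> {} \<and> E \<subseteq> V \<times> V \<and> (\<forall>x\<in>V. l x < n)"
  by (induction rule: cw_gen.induct) auto

definition good where
 "good n V E l S m X f \<longleftrightarrow> X \<subseteq> V \<and> (\<forall>x\<in>X. f x < n) \<and> m \<le> card (X \<inter> S) \<and> card (X \<inter> S) \<le> 2*m \<and>
   (\<forall>x\<in>X. \<forall>y\<in>X. f x = f y \<longrightarrow> l x = l y \<and> (\<forall>z\<in>V-X. ((x,z)\<in>E \<longleftrightarrow> (y,z)\<in>E) \<and> ((z,x)\<in>E \<longleftrightarrow> (z,y)\<in>E)))"

lemma goodD1: "good n V E l S m X f \<Longrightarrow> X \<subseteq> V"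
  unfolding good_def by (elim conjE) assumption

lemma goodD2: "good n V E l S m X f \<Longrightarrow> \<forall>x\<in>X. f x < n"
  unfolding good_def by (elim conjE) assumption

lemma goodD3: "good n V E l S m X f \<Longrightarrow> m \<le> card (X \<inter> S)"
  unfolding good_def by (elim conjE) assumption

lemma goodD4: "good n V E l S m X f \<Longrightarrow> card (X \<inter> S) \<le> 2*m"
  unfolding good_def by (elim conjE) assumption

lemma goodD5: "good n V E l S m X f \<Longrightarrow> \<forall>x\<in>X. \<forall>y\<in>X. f x = f y \<longrightarrow> l x = l y \<and> (\<forall>z\<in>V-X. ((x,z)\<in>E \<longleftrightarrow> (y,z)\<in>E) \<and> ((z,x)\<in>E \<longleftrightarrow> (z,y)\<in>E))"
  unfolding good_def by (elim conjE) assumption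

lemmas goodD = goodD1 goodD2 goodD3 goodD4 goodD5

lemma split_lemma:
  assumes "cw_gen n V E l"
  shows "1 \<le> m \<Longrightarrow> m \<le> card (V \<inter> S) \<Longrightarrow> \<exists>X f. good n V E l S m X f"
  using assms
proof (induction arbitrary: m rule: cw_gen.induct)
  case (cw_vertex i v)
  then have "card ({v} \<inter> S) \<le> 1" by (cases "v \<in> S") auto
  with cw_vertex have "m = 1" "card ({v} \<inter> S) = 1" by auto
  then show ?case using cw_vertex unfolding good_def
    by (intro exI[of _ "{v}"] exI[of _ "\<lambda>_. i"]) auto
next
  case (cw_union V1 E1 l1 V2 E2 l2)
  note b1 = cw_basic[OF cw_union.hyps(1)] and b2 = cw_basic[OF cw_union.hyps(2)]
  have cardU: "card ((V1 \<union> V2) \<inter> S) = card (V1 \<inter> S) + card (V2 \<inter> S)"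
    unfolding Int_Un_distrib2 using b1 b2 cw_union.hyps(3) by (intro card_Un_disjoint) auto
  consider "m \<le> card (V1 \<inter> S)" | "m \<le> card (V2 \<inter> S)" | "card (V1 \<inter> S) < m" "card (V2 \<inter> S) < m" by linarith
  then show ?case
  proof cases
    case 1
    then obtain X f where g: "good n V1 E1 l1 S m X f" using cw_union.IH(1)[OF cw_union.prems(1) 1] by blast
    have e1: "\<And>x z. x \<in> V1 \<Longrightarrow> (x,z) \<in> E1 \<union> E2 \<longleftrightarrow> (x,z) \<in> E1 \<and> z \<in> V1"
      "\<And>x z. x \<in> V1 \<Longrightarrow> (z,x) \<in> E1 \<union> E2 \<longleftrightarrow> (z,x) \<in> E1 \<and> z \<in> V1"
      using b1 b2 cw_union.hyps(3) by blast+
    show ?thesis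
    proof (intro exI[of _ X] exI[of _ f])
      have XV: "X \<subseteq> V1" using goodD[OF g] by blast
      have key: "\<forall>x\<in>X. \<forall>y\<in>X. f x = f y \<longrightarrow> (if x \<in> V1 then l1 x else l2 x) = (if y \<in> V1 then l1 y else l2 y) \<and> (\<forall>z\<in>V1 \<union> V2 - X. ((x, z) \<in> E1 \<union> E2) = ((y, z) \<in> E1 \<union> E2) \<and> ((z, x) \<in> E1 \<union> E2) = ((z, y) \<in> E1 \<union> E2))"
      proof (intro ballI impI)
        fix x y assume xy: "x \<in> X" "y \<in> X" "f x = f y"
        then have xy1: "x \<in> V1" "y \<in> V1" using XV by auto
        have h: "l1 x = l1 y" "\<forall>z\<in>V1-X. ((x,z)\<in>E1 \<longleftrightarrow> (y,z)\<in>E1) \<and> ((z,x)\<in>E1 \<longleftrightarrow> (z,y)\<in>E1)"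
          using goodD(5)[OF g] xy by blast+
        have lab: "(if x \<in> V1 then l1 x else l2 x) = (if y \<in> V1 then l1 y else l2 y)" using h xy1 by simp
        have zz: "\<forall>z\<in>V1 \<union> V2 - X. ((x, z) \<in> E1 \<union> E2) = ((y, z) \<in> E1 \<union> E2) \<and> ((z, x) \<in> E1 \<union> E2) = ((z, y) \<in> E1 \<union> E2)"
          unfolding e1(1)[OF xy1(1)] e1(1)[OF xy1(2)] e1(2)[OF xy1(1)] e1(2)[OF xy1(2)]
          using h(2) by blast
        show "(if x \<in> V1 then l1 x else l2 x) = (if y \<in> V1 then l1 y else l2 y) \<and> (\<forall>z\<in>V1 \<union> V2 - X. ((x, z) \<in> E1 \<union> E2) = ((y, z) \<in> E1 \<union> E2) \<and> ((z, x) \<in> E1 \<union> E2) = ((z, y) \<in> E1 \<union> E2))"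
          using lab zz by blast
      qed
      have g': "\<forall>x\<in>X. f x < n" "m \<le> card (X \<inter> S)" "card (X \<inter> S) \<le> 2*m" using goodD[OF g] by blast+
      have XV': "X \<subseteq> V1 \<union> V2" using XV by blast
      show "good n (V1 \<union> V2) (E1 \<union> E2) (\<lambda>x. if x \<in> V1 then l1 x else l2 x) S m X f"
        unfolding good_def by (intro conjI XV' g'(1) g'(2) g'(3) key)
    qed
  next
    case 2
    then obtain X f where g: "good n V2 E2 l2 S m X f" using cw_union.IH(2)[OF cw_union.prems(1) 2] by blast
    have e1: "\<And>x z. x \<in> V2 \<Longrightarrow> (x,z) \<in> E1 \<union> E2 \<longleftrightarrow> (x,z) \<in> E2 \<and> z \<in> V2"
      "\<And>x z. x \<in> V2 \<Longrightarrow> (z,x) \<in> E1 \<union> E2 \<longleftrightarrow> (z,x) \<in> E2 \<and> z \<in> V2"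
      using b1 b2 cw_union.hyps(3) by blast+
    show ?thesis
    proof (intro exI[of _ X] exI[of _ f])
      have XV: "X \<subseteq> V2" using goodD[OF g] by blast
      have key: "\<forall>x\<in>X. \<forall>y\<in>X. f x = f y \<longrightarrow> (if x \<in> V1 then l1 x else l2 x) = (if y \<in> V1 then l1 y else l2 y) \<and> (\<forall>z\<in>V1 \<union> V2 - X. ((x, z) \<in> E1 \<union> E2) = ((y, z) \<in> E1 \<union> E2) \<and> ((z, x) \<in> E1 \<union> E2) = ((z, y) \<in> E1 \<union> E2))"
      proof (intro ballI impI)
        fix x y assume xy: "x \<in> X" "y \<in> X" "f x = f y"
        then have xy1: "x \<in> V2" "y \<in> V2" using XV by auto
        then have xy2: "x \<notin> V1" "y \<notin> V1" using cw_union.hyps(3) by auto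
        have h: "l2 x = l2 y" "\<forall>z\<in>V2-X. ((x,z)\<in>E2 \<longleftrightarrow> (y,z)\<in>E2) \<and> ((z,x)\<in>E2 \<longleftrightarrow> (z,y)\<in>E2)"
          using goodD(5)[OF g] xy by blast+
        have lab: "(if x \<in> V1 then l1 x else l2 x) = (if y \<in> V1 then l1 y else l2 y)" using h xy2 by simp
        have zz: "\<forall>z\<in>V1 \<union> V2 - X. ((x, z) \<in> E1 \<union> E2) = ((y, z) \<in> E1 \<union> E2) \<and> ((z, x) \<in> E1 \<union> E2) = ((z, y) \<in> E1 \<union> E2)"
          unfolding e1(1)[OF xy1(1)] e1(1)[OF xy1(2)] e1(2)[OF xy1(1)] e1(2)[OF xy1(2)]
          using h(2) by blast
        show "(if x \<in> V1 then l1 x else l2 x) = (if y \<in> V1 then l1 y else l2 y) \<and> (\<forall>z\<in>V1 \<union> V2 - X. ((x, z) \<in> E1 \<union> E2) = ((y, z) \<in> E1 \<union> E2) \<and> ((z, x) \<in> E1 \<union> E2) = ((z, y) \<in> E1 \<union> E2))"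
          using lab zz by blast
      qed
      have g': "\<forall>x\<in>X. f x < n" "m \<le> card (X \<inter> S)" "card (X \<inter> S) \<le> 2*m" using goodD[OF g] by blast+
      have XV': "X \<subseteq> V1 \<union> V2" using XV by blast
      show "good n (V1 \<union> V2) (E1 \<union> E2) (\<lambda>x. if x \<in> V1 then l1 x else l2 x) S m X f"
        unfolding good_def by (intro conjI XV' g'(1) g'(2) g'(3) key)
    qed
  next
    case 3
    have lab: "\<forall>x\<in>V1 \<union> V2. (if x \<in> V1 then l1 x else l2 x) < n" using b1 b2 by auto
    have c: "m \<le> card ((V1 \<union> V2) \<inter> S)" "card ((V1 \<union> V2) \<inter> S) \<le> 2*m" using 3 cardU cw_union.prems by linarith+
    show ?thesis
      apply (intro exI[of _ "V1 \<union> V2"] exI[of _ "\<lambda>x. if x \<in> V1 then l1 x else l2 x"])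
      unfolding good_def by (intro conjI subset_refl lab c) simp
  qed
next
  case (cw_arcs V E l i j)
  obtain X f where g: "good n V E l S m X f" using cw_arcs.IH[OF cw_arcs.prems] by blast
  have XV: "X \<subseteq> V" and g': "\<forall>x\<in>X. f x < n" "m \<le> card (X \<inter> S)" "card (X \<inter> S) \<le> 2*m"
    and h: "\<forall>x\<in>X. \<forall>y\<in>X. f x = f y \<longrightarrow> l x = l y \<and> (\<forall>z\<in>V-X. ((x,z)\<in>E \<longleftrightarrow> (y,z)\<in>E) \<and> ((z,x)\<in>E \<longleftrightarrow> (z,y)\<in>E))"
    using goodD[OF g] by blast+
  let ?N = "{(x, y). x \<in> V \<and> y \<in> V \<and> l x = i \<and> l y = j}"
  have key: "\<forall>x\<in>X. \<forall>y\<in>X. f x = f y \<longrightarrow> l x = l y \<and> (\<forall>z\<in>V-X. ((x,z)\<in>E \<union> ?N \<longleftrightarrow> (y,z)\<in>E \<union> ?N) \<and> ((z,x)\<in>E \<union> ?N \<longleftrightarrow> (z,y)\<in>E \<union> ?N))"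
  proof (intro ballI impI)
    fix x y assume xy: "x \<in> X" "y \<in> X" "f x = f y"
    then have hh: "l x = l y" "\<forall>z\<in>V-X. ((x,z)\<in>E \<longleftrightarrow> (y,z)\<in>E) \<and> ((z,x)\<in>E \<longleftrightarrow> (z,y)\<in>E)" using h by blast+
    have "x \<in> V" "y \<in> V" using xy XV by auto
    then have n1: "\<And>z. (x,z) \<in> ?N \<longleftrightarrow> (y,z) \<in> ?N" "\<And>z. (z,x) \<in> ?N \<longleftrightarrow> (z,y) \<in> ?N" using hh(1) by auto
    show "l x = l y \<and> (\<forall>z\<in>V-X. ((x,z)\<in>E \<union> ?N \<longleftrightarrow> (y,z)\<in>E \<union> ?N) \<and> ((z,x)\<in>E \<union> ?N \<longleftrightarrow> (z,y)\<in>E \<union> ?N))"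
      unfolding Un_iff using hh n1 by blast
  qed
  show ?case apply (intro exI[of _ X] exI[of _ f])
    unfolding good_def by (intro conjI XV g'(1) g'(2) g'(3) key)
next
  case (cw_relabel V E l i j)
  obtain X f where g: "good n V E l S m X f" using cw_relabel.IH[OF cw_relabel.prems] by blast
  have XV: "X \<subseteq> V" and g': "\<forall>x\<in>X. f x < n" "m \<le> card (X \<inter> S)" "card (X \<inter> S) \<le> 2*m"
    and h: "\<forall>x\<in>X. \<forall>y\<in>X. f x = f y \<longrightarrow> l x = l y \<and> (\<forall>z\<in>V-X. ((x,z)\<in>E \<longleftrightarrow> (y,z)\<in>E) \<and> ((z,x)\<in>E \<longleftrightarrow> (z,y)\<in>E))"
    using goodD[OF g] by blast+
  have key: "\<forall>x\<in>X. \<forall>y\<in>X. f x = f y \<longrightarrow> (if l x = i then j else l x) = (if l y = i then j else l y) \<and> (\<forall>z\<in>V-X. ((x,z)\<in>E \<longleftrightarrow> (y,z)\<in>E) \<and> ((z,x)\<in>E \<longleftrightarrow> (z,y)\<in>E))"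
  proof (intro ballI impI)
    fix x y assume "x \<in> X" "y \<in> X" "f x = f y"
    with h have "l x = l y \<and> (\<forall>z\<in>V-X. ((x,z)\<in>E \<longleftrightarrow> (y,z)\<in>E) \<and> ((z,x)\<in>E \<longleftrightarrow> (z,y)\<in>E))" by blast
    then show "(if l x = i then j else l x) = (if l y = i then j else l y) \<and> (\<forall>z\<in>V-X. ((x,z)\<in>E \<longleftrightarrow> (y,z)\<in>E) \<and> ((z,x)\<in>E \<longleftrightarrow> (z,y)\<in>E))"
      by (simp only:) simp
  qed
  show ?case apply (intro exI[of _ X] exI[of _ f])
    unfolding good_def by (intro conjI XV g'(1) g'(2) g'(3) key)
qed



lemma build_vertices:
  assumes "finite V" "V \<noteq> {}"
  shows "inj_on g V \<Longrightarrow> (\<forall>x\<in>V. g x < n) \<Longrightarrow> \<exists>l. cw_gen n V {} l \<and> (\<forall>x\<in>V. l x = g x)"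
  using assms
proof (induction V rule: finite_ne_induct)
  case (singleton x)
  have "cw_gen n {x} {} (\<lambda>_. g x)" using singleton by (intro cw_vertex) auto
  then show ?case by auto
next
  case (insert x F)
  obtain l2 where l2: "cw_gen n F {} l2" "\<forall>y\<in>F. l2 y = g y"
    using insert.IH insert.prems by (meson inj_on_insert insert_iff)
  have v: "cw_gen n {x} {} (\<lambda>_. g x)" using insert.prems by (intro cw_vertex) auto
  have "cw_gen n ({x} \<union> F) ({} \<union> {}) (\<lambda>y. if y \<in> {x} then g x else l2 y)"
    using cw_union[OF v l2(1)] insert.hyps by auto
  then show ?case using l2(2) by (intro exI[of _ "\<lambda>y. if y \<in> {x} then g x else l2 y"]) auto
qed

lemma add_arcs:
  assumes g: "cw_gen n V {} l" and inj: "inj_on l V"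
  shows "finite A \<Longrightarrow> (\<forall>(x,y)\<in>A. x \<in> V \<and> y \<in> V \<and> x \<noteq> y) \<Longrightarrow> cw_gen n V A l"
proof (induction A rule: finite_induct)
  case empty
  then show ?case using g by simp
next
  case (insert p A)
  obtain x y where p: "p = (x,y)" by (cases p)
  have xy: "x \<in> V" "y \<in> V" "x \<noteq> y" using insert.prems p by auto
  have ga: "cw_gen n V A l" using insert by auto
  have lt: "l x < n" "l y < n" using cw_basic[OF ga] xy by auto
  have ne: "l x \<noteq> l y" using inj xy by (meson inj_on_def)
  have eq: "{(u, v). u \<in> V \<and> v \<in> V \<and> l u = l x \<and> l v = l y} = {(x,y)}"
    using inj xy unfolding inj_on_def by auto
  have "cw_gen n V (A \<union> {(u, v). u \<in> V \<and> v \<in> V \<and> l u = l x \<and> l v = l y}) l"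
    by (rule cw_arcs[OF ga lt ne])
  then show ?case unfolding eq p by simp
qed

lemma cw_exists:
  assumes "finite V" "V \<noteq> {}" "E \<subseteq> V \<times> V" "\<forall>x. (x,x) \<notin> E"
  shows "\<exists>l. cw_gen (card V) V E l"
proof -
  obtain g where g: "bij_betw g V {0..<card V}" using ex_bij_betw_finite_nat[OF assms(1)] by blast
  then have gi: "inj_on g V" "\<forall>x\<in>V. g x < card V" by (auto simp: bij_betw_def)
  obtain l where l: "cw_gen (card V) V {} l" "\<forall>x\<in>V. l x = g x"
    using build_vertices[OF assms(1,2) gi] by blast
  have "inj_on l V" using gi(1) l(2) by (metis inj_on_cong)
  moreover have "finite E" using assms(1,3) by (meson finite_SigmaI finite_subset)
  moreover have "\<forall>(x,y)\<in>E. x \<in> V \<and> y \<in> V \<and> x \<noteq> y" using assms(3,4) by auto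
  ultimately have "cw_gen (card V) V E l" using add_arcs[OF l(1)] by blast
  then show ?thesis by blast
qed

lemma tw_finite: "finite (tw_elems k)"
proof -
  have "tw_elems k \<subseteq> T ` {..<k} \<union> (\<lambda>(a,b). W a b) ` ({..<k} \<times> {..<k})"
    unfolding tw_elems_def by auto
  then show ?thesis by (rule finite_subset) auto
qed

lemma tw_irrefl: "(x,x) \<notin> tw_hasse k"
  by (cases x) (auto simp: hTT hWW)

lemma tw_sub: "tw_hasse k \<subseteq> tw_elems k \<times> tw_elems k"
  using hasse_sub by auto



lemma nbrT_out: "(T j, z) \<in> tw_hasse k \<Longrightarrow> (T j', z) \<in> tw_hasse k \<Longrightarrow> j = j'"
  by (cases z) (auto simp: hTT hTW)

lemma nbrT_in: "(z, T j) \<in> tw_hasse k \<Longrightarrow> (z, T j') \<in> tw_hasse k \<Longrightarrow> j = j'"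
  by (cases z) (auto simp: hTT hWT)

lemma main_bound:
  assumes k: "k \<ge> 14" and g: "cw_gen c (tw_elems k) (tw_hasse k) l"
  shows "k \<le> 13 * c"
proof -
  define V where "V = tw_elems k"
  define E where "E = tw_hasse k"
  define q where "q = (k + 12) div 13"
  have q1: "k \<le> 13 * q" "3 * q + 8 \<le> k" using k unfolding q_def by auto
  define S where "S = T ` {..<k}"
  have SV: "S \<subseteq> V" unfolding S_def V_def by auto
  have cS: "card (V \<inter> S) = k" using SV unfolding S_def by (simp add: Int_absorb1 card_image inj_on_def)
  obtain X f where gd: "good c V E l S (q+4) X f"
    using split_lemma[of c V E l "q+4" S] g q1 cS unfolding V_def E_def by auto
  note XV = goodD1[OF gd] and fl = goodD2[OF gd] and c1 = goodD3[OF gd] and c2 = goodD4[OF gd]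
    and hom = goodD5[OF gd]
  define XT where "XT = {j. j < k \<and> T j \<in> X}"
  define C where "C = {j. j < k \<and> T j \<notin> X}"
  have XS: "X \<inter> S = T ` XT" unfolding XT_def S_def by auto
  have cXT: "card (X \<inter> S) = card XT" unfolding XS by (simp add: card_image inj_on_def)
  have CXT: "C = {..<k} - XT" unfolding C_def XT_def by auto
  have fXT: "finite XT" "XT \<subseteq> {..<k}" unfolding XT_def by auto
  have cC: "card C = k - card XT" unfolding CXT using fXT by (simp add: card_Diff_subset)
  have "card XT \<le> 2 * q + 8" using c2 cXT by simp
  then have "card XT + q \<le> k" using q1 by linarith
  then have cCq: "q \<le> card C" unfolding cC by linarith
  have homE: "\<And>x y z. x \<in> X \<Longrightarrow> y \<in> X \<Longrightarrow> f x = f y \<Longrightarrow> z \<in> V \<Longrightarrow> z \<notin> X \<Longrightarrow>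
       ((x,z) \<in> E \<longleftrightarrow> (y,z) \<in> E) \<and> ((z,x) \<in> E \<longleftrightarrow> (z,y) \<in> E)"
    using hom by blast
  have inV: "\<And>x z. (x,z) \<in> E \<Longrightarrow> x \<in> V \<and> z \<in> V" unfolding E_def V_def using hasse_sub by blast
  define A where "A = {j \<in> XT. \<forall>z. ((T j, z) \<in> E \<longrightarrow> z \<in> X) \<and> ((z, T j) \<in> E \<longrightarrow> z \<in> X)}"
  define B where "B = XT - A"
  have fin: "finite {..<c}" by simp
  show ?thesis
  proof (cases "q \<le> card B")
    case True
    have "inj_on (\<lambda>j. f (T j)) B"
    proof (rule inj_onI)
      fix j j' assume jj: "j \<in> B" "j' \<in> B" "f (T j) = f (T j')"
      have X: "T j \<in> X" "T j' \<in> X" using jj unfolding B_def XT_def by auto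
      from jj(1) obtain z where z: "((T j, z) \<in> E \<and> z \<notin> X) \<or> ((z, T j) \<in> E \<and> z \<notin> X)"
        unfolding B_def A_def by auto
      then show "j = j'"
      proof
        assume zz: "(T j, z) \<in> E \<and> z \<notin> X"
        then have "(T j', z) \<in> E" using homE[OF X jj(3)] inV by blast
        then show ?thesis using zz nbrT_out unfolding E_def by blast
      next
        assume zz: "(z, T j) \<in> E \<and> z \<notin> X"
        then have "(z, T j') \<in> E" using homE[OF X jj(3)] inV by blast
        then show ?thesis using zz nbrT_in unfolding E_def by blast
      qed
    qed
    moreover have "(\<lambda>j. f (T j)) ` B \<subseteq> {..<c}" using fl unfolding B_def XT_def by auto
    ultimately have "card B \<le> card {..<c}" using card_inj_on_le fin by blast
    then show ?thesis using True q1 by simp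
  next
    case False
    have fA: "finite A" "A \<subseteq> XT" unfolding A_def using fXT by auto
    have b1: "card B = card XT - card A" unfolding B_def using fA by (rule card_Diff_subset)
    have b2: "card A \<le> card XT" using fA fXT by (simp add: card_mono)
    have cA: "card A \<ge> 4" using False c1 cXT b1 b2 by linarith
    have Ane: "A \<noteq> {}" using cA by auto
    define p where "p = Min A"
    define r where "r = Max A"
    have pA: "p \<in> A" "r \<in> A" unfolding p_def r_def using fA Ane by auto
    have "A \<subseteq> {p..r}" unfolding p_def r_def using fA by auto
    then have "card A \<le> card {p..r}" by (intro card_mono) auto
    then have pr: "p + 3 \<le> r" using cA by (simp only: card_atLeastAtMost)
    have prk: "r < k" "T p \<in> X" "T r \<in> X" using pA fA unfolding XT_def by auto
    define w where "w c' = (if p + 2 \<le> c' then W p c' else W c' r)" for c'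
    have wX: "w c' \<in> X" if "c' \<in> C" for c'
    proof (cases "p + 2 \<le> c'")
      case True
      have "(T p, W p c') \<in> E" unfolding E_def using True that unfolding C_def by (simp add: hTW)
      then show ?thesis using pA unfolding A_def w_def using True by auto
    next
      case False
      have "(W c' r, T r) \<in> E" unfolding E_def using False pr prk by (simp add: hWT)
      then show ?thesis using pA unfolding A_def w_def using False by auto
    qed
    have "inj_on (\<lambda>c'. f (w c')) C"
    proof (rule inj_onI)
      fix a b assume ab: "a \<in> C" "b \<in> C" "f (w a) = f (w b)"
      have TaV: "T a \<in> V" "T a \<notin> X" using ab unfolding C_def V_def by auto
      show "a = b"
      proof (cases "p + 2 \<le> a")
        case True
        have e: "(w a, T a) \<in> E" unfolding E_def w_def using True ab unfolding C_def by (simp add: hWT)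
        then have "(w b, T a) \<in> E" using homE[OF wX[OF ab(1)] wX[OF ab(2)] ab(3) TaV] by blast
        then show ?thesis unfolding w_def E_def using prk TaV by (auto simp: hWT split: if_splits)
      next
        case False
        have e: "(T a, w a) \<in> E" unfolding E_def w_def using False pr prk ab unfolding C_def by (simp add: hTW)
        then have "(T a, w b) \<in> E" using homE[OF wX[OF ab(1)] wX[OF ab(2)] ab(3) TaV] by blast
        then show ?thesis unfolding w_def E_def using prk TaV by (auto simp: hTW split: if_splits)
      qed
    qed
    moreover have "(\<lambda>c'. f (w c')) ` C \<subseteq> {..<c}" using fl wX by auto
    ultimately have "card C \<le> card {..<c}" using card_inj_on_le fin by blast
    then show ?thesis using cCq q1 by simp
  qed
qed


theorem lemma7p2:
  fixes k :: nat
  assumes "k \<ge> 8"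
  shows "int (clique_width (tw_elems k) (tw_hasse k)) \<ge> \<lceil>real k / 13\<rceil>"
proof -
  have t0: "T 0 \<in> tw_elems k" using assms by simp
  then have ne: "tw_elems k \<noteq> {}" by blast
  have ex: "\<exists>l. cw_gen (card (tw_elems k)) (tw_elems k) (tw_hasse k) l"
    using cw_exists[OF tw_finite ne tw_sub] tw_irrefl by blast
  define c where "c = clique_width (tw_elems k) (tw_hasse k)"
  have "\<exists>l. cw_gen c (tw_elems k) (tw_hasse k) l"
    unfolding c_def clique_width_def by (rule LeastI_ex) (use ex in blast)
  then obtain l where g: "cw_gen c (tw_elems k) (tw_hasse k) l" by blast
  have "k \<le> 13 * c"
  proof (cases "k \<ge> 14")
    case True
    then show ?thesis using main_bound[OF True g] by simp
  next
    case False
    have "T 0 \<in> tw_elems k" using assms by simp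
    then have "l (T 0) < c" using cw_basic[OF g] by blast
    then show ?thesis using False by linarith
  qed
  then have "real k / 13 \<le> real c" by simp
  then have "\<lceil>real k / 13\<rceil> \<le> int c" by (simp add: ceiling_le_iff)
  then show ?thesis unfolding c_def .
qed

end
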